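(* Let $R$ be a valuation domain, $J/A$ a type with $J=\bigcup_{\nu<\omega_1} r_\nu^{-1}R$ as in the context, and let $\delta<\omega_1$ be a limit ordinal such that $R/\bigcap_{\nu<\delta} r_\nu A$ is not complete. Suppose $\{e^\tau_\sigma:\sigma<\tau<\delta\}\subseteq R^*$ satisfies $e^\rho_\tau e^\tau_\sigma-e^\rho_\sigma\in r_\sigma A$ for all $\sigma<\tau<\rho<\delta$. Then there are units $e^\delta_{\sigma,j}\in R^*$ ($\sigma<\delta$, $j\in\{0,1\}$) such that $e^\delta_{\tau,j}e^\tau_\sigma-e^\delta_{\sigma,j}\in r_\sigma A$ for all $\sigma<\tau<\delta$ and $j\in\{0,1\}$, but there is no family of units $\{c_\sigma:\sigma<\delta\}$ together with units $c_{\delta,0},c_{\delta,1}\in R^*$ such that $c_\tau-e^\tau_\sigma c_\sigma\in r_\sigma A$ for all $\sigma<\tau<\delta$ and $c_{\delta,j}-e^\delta_{\sigma,j}c_\sigma\in r_\sigma A$ for all $\sigma<\delta$ and $j\in\{0,1\}$.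
   Context: $R$ is a valuation domain with quotient field $Q\neq R$ and unit group $R^*$. $A\subseteq J$ are $R$-submodules of $Q$ with $J=\bigcup_{\nu<\omega_1} r_\nu^{-1}R$, $r_\nu\in R\setminus\{0\}$, $r_\mu\mid r_\nu$ for $\mu<\nu$. $R/\bigcap_{\nu<\delta} r_\nu A$ carries the linear topology with basic neighborhoods of $0$ the images of $r_\nu A$ ($\nu<\delta$); complete means every Cauchy sequence converges. *)

theory Defs
  imports Main "HOL-Library.Countable_Set"
begin

text \<open>The quotient field Q is modelled as the ambient field type 'a; R is a subset of it.\<close>

definition valuation_domain :: "'a::field set \<Rightarrow> bool" where
  "valuation_domain R \<longleftrightarrow>
     0 \<in> R \<and> 1 \<in> R \<and>
     (\<forall>x\<in>R. \<forall>y\<in>R. x + y \<in> R \<and> x * y \<in> R \<and> - x \<in> R) \<and>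
     (\<forall>q. q \<noteq> 0 \<longrightarrow> q \<in> R \<or> inverse q \<in> R)"

definition quotient_field_of :: "'a::field set \<Rightarrow> bool" where
  "quotient_field_of R \<longleftrightarrow> (\<forall>q. \<exists>a\<in>R. \<exists>b\<in>R. b \<noteq> 0 \<and> q = a / b)"

definition units_of_dom :: "'a::field set \<Rightarrow> 'a set" where
  "units_of_dom R = {x. x \<in> R \<and> x \<noteq> 0 \<and> inverse x \<in> R}"

definition submodule_of :: "'a::field set \<Rightarrow> 'a set \<Rightarrow> bool" where
  "submodule_of R M \<longleftrightarrow> 0 \<in> M \<and> (\<forall>x\<in>M. \<forall>y\<in>M. x + y \<in> M) \<and>
     (\<forall>r\<in>R. \<forall>x\<in>M. r * x \<in> M)"

definition scale_set :: "'a::field \<Rightarrow> 'a set \<Rightarrow> 'a set" where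
  "scale_set r A = {r * a | a. a \<in> A}"

definition dvd_in :: "'a::field set \<Rightarrow> 'a \<Rightarrow> 'a \<Rightarrow> bool" where
  "dvd_in R a b \<longleftrightarrow> (\<exists>t\<in>R. b = t * a)"

definition omega1_type :: "'i::wellorder itself \<Rightarrow> bool" where
  "omega1_type _ \<longleftrightarrow> \<not> countable (UNIV :: 'i set) \<and> (\<forall>i::'i. countable {..<i})"

definition is_limit :: "'i::wellorder \<Rightarrow> bool" where
  "is_limit d \<longleftrightarrow> (\<exists>s. s < d) \<and> (\<forall>s. s < d \<longrightarrow> (\<exists>t. s < t \<and> t < d))"

text \<open>Completeness of R / (\<Inter>_{nu<delta} r_nu A) in the linear topology whose basic
  neighbourhoods of 0 are the images of r_nu A (nu < delta); sequences are lifted to R.\<close>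
definition quot_complete :: "'a::field set \<Rightarrow> 'a set \<Rightarrow> ('i::wellorder \<Rightarrow> 'a) \<Rightarrow> 'i \<Rightarrow> bool" where
  "quot_complete R A r d \<longleftrightarrow>
    (\<forall>x :: nat \<Rightarrow> 'a. (\<forall>n. x n \<in> R) \<longrightarrow>
       (\<forall>nu<d. \<exists>N. \<forall>m\<ge>N. \<forall>n\<ge>N. x m - x n \<in> scale_set (r nu) A) \<longrightarrow>
       (\<exists>y\<in>R. \<forall>nu<d. \<exists>N. \<forall>n\<ge>N. x n - y \<in> scale_set (r nu) A))"

end

theory Submission
  imports Defs "HOL-Library.Countable_Set"
begin

lemma vd_R: assumes "valuation_domain R"
  shows "0 \<in> R" "1 \<in> R" "x \<in> R \<Longrightarrow> y \<in> R \<Longrightarrow> x + y \<in> R"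
    "x \<in> R \<Longrightarrow> y \<in> R \<Longrightarrow> x * y \<in> R" "x \<in> R \<Longrightarrow> - x \<in> R"
    "x \<in> R \<Longrightarrow> y \<in> R \<Longrightarrow> x - y \<in> R"
    "q \<noteq> 0 \<Longrightarrow> q \<in> R \<or> inverse q \<in> R"
proof -
  note d = assms[unfolded valuation_domain_def]
  show "0 \<in> R" "1 \<in> R" using d by blast+
  show "x \<in> R \<Longrightarrow> y \<in> R \<Longrightarrow> x + y \<in> R" using d by blast
  show "x \<in> R \<Longrightarrow> y \<in> R \<Longrightarrow> x * y \<in> R" using d by blast
  show "x \<in> R \<Longrightarrow> - x \<in> R" using d by blast
  show "q \<noteq> 0 \<Longrightarrow> q \<in> R \<or> inverse q \<in> R" using d by blast
  assume "x \<in> R" "y \<in> R"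
  then have "x + (- y) \<in> R" using d by blast
  then show "x - y \<in> R" by simp
qed
lemma unit_mult: assumes v: "valuation_domain R" and "u \<in> units_of_dom R" "v \<in> units_of_dom R"
  shows "u * v \<in> units_of_dom R"
proof -
  have u: "u \<in> R" "u \<noteq> 0" "inverse u \<in> R" and w: "v \<in> R" "v \<noteq> 0" "inverse v \<in> R"
    using assms(2,3) unfolding units_of_dom_def by blast+
  have "u * v \<in> R" "inverse u * inverse v \<in> R" using vd_R(4)[OF v] u w by blast+
  moreover have "u * v \<noteq> 0" using u w by simp
  moreover have "inverse (u * v) = inverse u * inverse v" by (simp add: inverse_mult_distrib)
  ultimately show ?thesis unfolding units_of_dom_def by simp
qed
lemma unit_inv: assumes "u \<in> units_of_dom R"
  shows "inverse u \<in> units_of_dom R"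
  using assms by (auto simp: units_of_dom_def)

lemma one_unit: assumes "valuation_domain R" shows "1 \<in> units_of_dom R"
  using vd_R(2)[OF assms] by (simp add: units_of_dom_def)

lemma nonunit_add:
  assumes v: "valuation_domain R" and a: "a \<in> R" "a \<notin> units_of_dom R"
    and b: "b \<in> R" "b \<notin> units_of_dom R"
  shows "a + b \<notin> units_of_dom R"
proof
  assume ab: "a + b \<in> units_of_dom R"
  have a0: "a \<noteq> 0" using ab b by auto
  have b0: "b \<noteq> 0" using ab a by auto
  have ia: "inverse a \<notin> R" using a a0 by (auto simp: units_of_dom_def)
  have ib: "inverse b \<notin> R" using b b0 by (auto simp: units_of_dom_def)
  have iab: "inverse (a + b) \<in> R" using ab by (auto simp: units_of_dom_def)
  have ab0: "a + b \<noteq> 0" using ab by (auto simp: units_of_dom_def)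
  have "a / b \<in> R \<or> inverse (a / b) \<in> R" using vd_R(7)[OF v, of "a/b"] a0 b0 by auto
  then show False
  proof
    assume h: "a / b \<in> R"
    have e: "1 + a / b = (a + b) / b" using b0 by (simp add: field_simps)
    have "inverse b = (1 + a / b) * inverse (a + b)"
      unfolding e using ab0 b0 by (simp add: divide_inverse)
    moreover have "1 + a / b \<in> R" using vd_R(2,3)[OF v] h by blast
    then have "(1 + a / b) * inverse (a + b) \<in> R"
      using vd_R(4)[OF v] iab by blast
    ultimately show False using ib by simp
  next
    assume h: "inverse (a / b) \<in> R"
    have h': "b / a \<in> R" using h by (simp add: inverse_divide)
    have e: "1 + b / a = (a + b) / a" using a0 by (simp add: field_simps)
    have "inverse a = (1 + b / a) * inverse (a + b)"
      unfolding e using ab0 a0 by (simp add: divide_inverse)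
    moreover have "1 + b / a \<in> R" using vd_R(2,3)[OF v] h' by blast
    then have "(1 + b / a) * inverse (a + b) \<in> R"
      using vd_R(4)[OF v] iab by blast
    ultimately show False using ia by simp
  qed
qed

lemma neg_nonunit: assumes "m \<in> R" "m \<notin> units_of_dom R" "valuation_domain R"
  shows "- m \<in> R \<and> - m \<notin> units_of_dom R"
proof -
  have "- m \<in> R" using vd_R(5)[OF assms(3)] assms by blast
  moreover have "- m \<notin> units_of_dom R"
  proof
    assume h: "- m \<in> units_of_dom R"
    then have "inverse (- m) \<in> R" "m \<noteq> 0" by (auto simp: units_of_dom_def)
    then have "- inverse (- m) \<in> R" using vd_R(5)[OF assms(3)] by blast
    then have "inverse m \<in> R" by simp
    then show False using assms \<open>m \<noteq> 0\<close> by (auto simp: units_of_dom_def)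
  qed
  ultimately show ?thesis by blast
qed

lemma one_plus_nonunit: assumes v: "valuation_domain R" and m: "m \<in> R" "m \<notin> units_of_dom R"
  shows "1 + m \<in> units_of_dom R"
proof (rule ccontr)
  assume h: "1 + m \<notin> units_of_dom R"
  have a: "1 + m \<in> R" using vd_R(2,3)[OF v] m by blast
  have "(1 + m) + (- m) \<notin> units_of_dom R"
    using nonunit_add[OF v a h, of "- m"] neg_nonunit[OF m v] by blast
  then show False using one_unit[OF v] by simp
qed

lemma unit_plus_nonunit: assumes v: "valuation_domain R" and u: "u \<in> units_of_dom R"
  and m: "m \<in> R" "m \<notin> units_of_dom R"
  shows "u + m \<in> units_of_dom R"
proof -
  have u0: "u \<noteq> 0" "inverse u \<in> R" "u \<in> R" using u by (auto simp: units_of_dom_def)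
  have mi: "m * inverse u \<in> R" using vd_R(4)[OF v] m u0 by blast
  have "m * inverse u \<notin> units_of_dom R"
  proof
    assume "m * inverse u \<in> units_of_dom R"
    then have "m * inverse u * u \<in> units_of_dom R" using unit_mult[OF v _ u] by blast
    then show False using m u0 by (simp add: mult.assoc)
  qed
  then have "1 + m * inverse u \<in> units_of_dom R" using one_plus_nonunit[OF v mi] by blast
  then have "u * (1 + m * inverse u) \<in> units_of_dom R" using unit_mult[OF v u] by blast
  moreover have "u * (1 + m * inverse u) = u + m" using u0 by (simp add: distrib_left mult.left_commute)
  ultimately show ?thesis by simp
qed

lemma M0: "submodule_of R A \<Longrightarrow> 0 \<in> scale_set r A"
  unfolding submodule_of_def scale_set_def by force

lemma Madd: assumes "submodule_of R A" "x \<in> scale_set r A" "y \<in> scale_set r A"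
  shows "x + y \<in> scale_set r A"
proof -
  obtain a b where ab: "x = r * a" "a \<in> A" "y = r * b" "b \<in> A"
    using assms(2,3) unfolding scale_set_def by blast
  have "a + b \<in> A" using assms(1) ab unfolding submodule_of_def by blast
  moreover have "x + y = r * (a + b)" using ab by (simp add: distrib_left)
  ultimately show ?thesis unfolding scale_set_def by blast
qed

lemma Mmult: assumes "submodule_of R A" "t \<in> R" "x \<in> scale_set r A"
  shows "t * x \<in> scale_set r A"
proof -
  obtain a where ab: "x = r * a" "a \<in> A"
    using assms(3) unfolding scale_set_def by blast
  have "t * a \<in> A" using assms(1,2) ab unfolding submodule_of_def by blast
  moreover have "t * x = r * (t * a)" using ab by (simp add: mult.left_commute)
  ultimately show ?thesis unfolding scale_set_def by blast
qed

lemma Mneg: assumes "valuation_domain R" "submodule_of R A" "x \<in> scale_set r A"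
  shows "- x \<in> scale_set r A"
proof -
  have "-1 \<in> R" using vd_R[OF assms(1)] by blast
  then have "(-1) * x \<in> scale_set r A" using Mmult[OF assms(2) _ assms(3)] by blast
  then show ?thesis by simp
qed

lemma Mdiff: assumes "valuation_domain R" "submodule_of R A" "x \<in> scale_set r A" "y \<in> scale_set r A"
  shows "x - y \<in> scale_set r A"
  using Madd[OF assms(2,3) Mneg[OF assms(1,2,4)]] by simp

lemma Mmono: assumes "submodule_of R A" "dvd_in R a b"
  shows "scale_set b A \<subseteq> scale_set a A"
proof
  fix x assume "x \<in> scale_set b A"
  then obtain c where c: "x = b * c" "c \<in> A" unfolding scale_set_def by blast
  obtain t where t: "t \<in> R" "b = t * a" using assms(2) unfolding dvd_in_def by blast
  have "t * c \<in> A" using assms(1) t c unfolding submodule_of_def by blast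
  moreover have "x = a * (t * c)" using c t by (simp add: mult.left_commute mult.commute)
  ultimately show "x \<in> scale_set a A" unfolding scale_set_def by blast
qed

lemma cofinal:
  fixes \<delta> :: "'i::wellorder"
  assumes om: "omega1_type TYPE('i)" and lim: "is_limit \<delta>"
  shows "\<exists>s::nat \<Rightarrow> 'i. strict_mono s \<and> (\<forall>n. s n < \<delta>) \<and> (\<forall>\<sigma><\<delta>. \<exists>n. \<sigma> < s n)"
proof -
  have cnt: "countable {..<\<delta>}" using om by (simp add: omega1_type_def)
  have ne: "{..<\<delta>} \<noteq> {}" using lim by (auto simp: is_limit_def)
  define f where "f = from_nat_into {..<\<delta>}"
  have rf: "range f = {..<\<delta>}" using cnt ne by (simp add: f_def)
  define g where "g = (\<lambda>x::'i. SOME t. x < t \<and> t < \<delta>)"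
  have g: "x < \<delta> \<Longrightarrow> x < g x \<and> g x < \<delta>" for x
    unfolding g_def by (rule someI_ex) (use lim in \<open>auto simp: is_limit_def\<close>)
  define s where "s = rec_nat (f 0) (\<lambda>n p. g (max p (f (Suc n))))"
  have s0: "s 0 = f 0" and sS: "s (Suc n) = g (max (s n) (f (Suc n)))" for n
    by (simp_all add: s_def)
  have fl: "f n < \<delta>" for n using rf by auto
  have sl: "s n < \<delta>" for n
    by (induction n) (auto simp: s0 sS fl g max_def)
  have sinc: "s n < s (Suc n) \<and> f (Suc n) < s (Suc n)" for n
    using g[of "max (s n) (f (Suc n))"] sl[of n] fl[of "Suc n"] by (auto simp: sS max_def split: if_splits)
  have fs: "f n \<le> s n" for n
    by (cases n) (auto simp: s0 sinc less_imp_le)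
  have "strict_mono s" using sinc by (simp add: strict_mono_Suc_iff)
  moreover have "\<forall>\<sigma><\<delta>. \<exists>n. \<sigma> < s n"
  proof (intro allI impI)
    fix \<sigma> assume "\<sigma> < \<delta>"
    then obtain k where "\<sigma> = f k" using rf by auto
    then have "\<sigma> < s (Suc k)" using fs[of k] sinc[of k] by auto
    then show "\<exists>n. \<sigma> < s n" by blast
  qed
  ultimately show ?thesis using sl by blast
qed

theorem lemma4:
  fixes R A J :: "'a::field set" and r :: "'i::wellorder \<Rightarrow> 'a"
    and \<delta> :: 'i and e :: "'i \<Rightarrow> 'i \<Rightarrow> 'a"
  assumes val: "valuation_domain R"
    and qf: "quotient_field_of R"
    and ne: "R \<noteq> UNIV"
    and om: "omega1_type TYPE('i)"
    and subA: "submodule_of R A" and subJ: "submodule_of R J" and AJ: "A \<subseteq> J"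
    and r_in: "\<And>nu. r nu \<in> R \<and> r nu \<noteq> 0"
    and r_dvd: "\<And>mu nu. mu < nu \<Longrightarrow> dvd_in R (r mu) (r nu)"
    and J_eq: "J = (\<Union>nu. {inverse (r nu) * x | x. x \<in> R})"
    and lim: "is_limit \<delta>"
    and notc: "\<not> quot_complete R A r \<delta>"
    and e_unit: "\<And>\<sigma> \<tau>. \<sigma> < \<tau> \<Longrightarrow> \<tau> < \<delta> \<Longrightarrow> e \<tau> \<sigma> \<in> units_of_dom R"
    and e_coh: "\<And>\<sigma> \<tau> \<rho>. \<sigma> < \<tau> \<Longrightarrow> \<tau> < \<rho> \<Longrightarrow> \<rho> < \<delta> \<Longrightarrow>
                  e \<rho> \<tau> * e \<tau> \<sigma> - e \<rho> \<sigma> \<in> scale_set (r \<sigma>) A"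
  shows "\<exists>ed :: 'i \<Rightarrow> nat \<Rightarrow> 'a.
           (\<forall>\<sigma><\<delta>. \<forall>j\<in>{0,1}. ed \<sigma> j \<in> units_of_dom R) \<and>
           (\<forall>\<sigma> \<tau>. \<sigma> < \<tau> \<and> \<tau> < \<delta> \<longrightarrow>
              (\<forall>j\<in>{0,1}. ed \<tau> j * e \<tau> \<sigma> - ed \<sigma> j \<in> scale_set (r \<sigma>) A)) \<and>
           \<not> (\<exists>(c :: 'i \<Rightarrow> 'a) (cd :: nat \<Rightarrow> 'a).
                (\<forall>\<sigma><\<delta>. c \<sigma> \<in> units_of_dom R) \<and>
                (\<forall>j\<in>{0,1}. cd j \<in> units_of_dom R) \<and>
                (\<forall>\<sigma> \<tau>. \<sigma> < \<tau> \<and> \<tau> < \<delta> \<longrightarrow> c \<tau> - e \<tau> \<sigma> * c \<sigma> \<in> scale_set (r \<sigma>) A) \<and>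
                (\<forall>\<sigma><\<delta>. \<forall>j\<in>{0,1}. cd j - ed \<sigma> j * c \<sigma> \<in> scale_set (r \<sigma>) A))"
proof -
  define M where "M = (\<lambda>\<sigma>. scale_set (r \<sigma>) A)"
  have M0': "0 \<in> M \<sigma>" for \<sigma> unfolding M_def by (rule M0[OF subA])
  have Madd': "a \<in> M \<sigma> \<Longrightarrow> b \<in> M \<sigma> \<Longrightarrow> a + b \<in> M \<sigma>" for a b \<sigma>
    unfolding M_def by (rule Madd[OF subA])
  have Mmult': "t \<in> R \<Longrightarrow> a \<in> M \<sigma> \<Longrightarrow> t * a \<in> M \<sigma>" for t a \<sigma>
    unfolding M_def by (rule Mmult[OF subA])
  have Mneg': "a \<in> M \<sigma> \<Longrightarrow> - a \<in> M \<sigma>" for a \<sigma>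
    unfolding M_def by (rule Mneg[OF val subA])
  have Mmono': "\<sigma> \<le> \<tau> \<Longrightarrow> M \<tau> \<subseteq> M \<sigma>" for \<sigma> \<tau>
    unfolding M_def using Mmono[OF subA r_dvd] by (cases "\<sigma> = \<tau>") auto
  have uR: "x \<in> units_of_dom R \<Longrightarrow> x \<in> R" for x by (simp add: units_of_dom_def)
  have uinvR: "x \<in> units_of_dom R \<Longrightarrow> inverse x \<in> R" for x by (simp add: units_of_dom_def)
  have unz: "x \<in> units_of_dom R \<Longrightarrow> x \<noteq> 0" for x by (simp add: units_of_dom_def)
  have e_coh': "\<sigma> < \<tau> \<Longrightarrow> \<tau> < \<rho> \<Longrightarrow> \<rho> < \<delta> \<Longrightarrow> e \<rho> \<tau> * e \<tau> \<sigma> - e \<rho> \<sigma> \<in> M \<sigma>"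
    for \<sigma> \<tau> \<rho> unfolding M_def by (rule e_coh)

  obtain s :: "nat \<Rightarrow> 'i" where smono: "strict_mono s" and sl: "\<And>n. s n < \<delta>"
    and scof: "\<And>\<sigma>. \<sigma> < \<delta> \<Longrightarrow> \<exists>n. \<sigma> < s n"
    using cofinal[OF om lim] by blast
  have sSuc: "s n < s (Suc n)" for n using smono by (simp add: strict_mono_def)
  define u where "u = rec_nat 1 (\<lambda>n p. p * inverse (e (s (Suc n)) (s n)))"
  have u0: "u 0 = 1" and uS: "u (Suc n) = u n * inverse (e (s (Suc n)) (s n))" for n
    by (simp_all add: u_def)
  have eS: "e (s (Suc n)) (s n) \<in> units_of_dom R" for n using e_unit[OF sSuc sl] .
  have uU: "u n \<in> units_of_dom R" for n
  proof (induction n)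
    case 0 then show ?case using one_unit[OF val] by (simp add: u0)
  next
    case (Suc n) then show ?case using unit_mult[OF val Suc unit_inv[OF eS]] by (simp add: uS)
  qed
  have ukey: "u (Suc n) * e (s (Suc n)) (s n) = u n" for n
    using unz[OF eS[of n]] by (simp add: uS mult.assoc)
  have chain: "u m * e (s m) \<sigma> - u k * e (s k) \<sigma> \<in> M \<sigma>" if "\<sigma> < s k" "k \<le> m" for \<sigma> k m
    using that(2)
  proof (induction m rule: dec_induct)
    case base then show ?case using M0' by simp
  next
    case (step m)
    have sm: "\<sigma> < s m" using that(1) step(1) smono
      by (metis dual_order.strict_trans1 strict_mono_less_eq)
    have c: "e (s (Suc m)) (s m) * e (s m) \<sigma> - e (s (Suc m)) \<sigma> \<in> M \<sigma>"
      using e_coh'[OF sm sSuc sl] .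
    have "u (Suc m) * (- (e (s (Suc m)) (s m) * e (s m) \<sigma> - e (s (Suc m)) \<sigma>)) \<in> M \<sigma>"
      using Mmult'[OF uR[OF uU] Mneg'[OF c]] .
    moreover have "u (Suc m) * (- (e (s (Suc m)) (s m) * e (s m) \<sigma> - e (s (Suc m)) \<sigma>))
        = u (Suc m) * e (s (Suc m)) \<sigma> - u m * e (s m) \<sigma>"
      using ukey[of m] by (simp add: algebra_simps)
    ultimately have "u (Suc m) * e (s (Suc m)) \<sigma> - u m * e (s m) \<sigma> \<in> M \<sigma>" by simp
    from Madd'[OF this step(3)] show ?case by simp
  qed
  define nn where "nn = (\<lambda>\<sigma>. LEAST n. \<sigma> < s n)"
  have nn1: "\<sigma> < \<delta> \<Longrightarrow> \<sigma> < s (nn \<sigma>)" for \<sigma>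
    unfolding nn_def using scof by (metis LeastI_ex)
  have nn2: "\<sigma> < s n \<Longrightarrow> nn \<sigma> \<le> n" for \<sigma> n
    unfolding nn_def by (rule Least_le)
  define ed0 where "ed0 = (\<lambda>\<sigma>. u (nn \<sigma>) * e (s (nn \<sigma>)) \<sigma>)"
  have ed0U: "\<sigma> < \<delta> \<Longrightarrow> ed0 \<sigma> \<in> units_of_dom R" for \<sigma>
    unfolding ed0_def using unit_mult[OF val uU e_unit[OF nn1 sl]] by blast
  have ed0R: "\<sigma> < \<delta> \<Longrightarrow> ed0 \<sigma> \<in> R" for \<sigma> using uR[OF ed0U] .
  have ed0c: "ed0 \<tau> * e \<tau> \<sigma> - ed0 \<sigma> \<in> M \<sigma>" if st: "\<sigma> < \<tau>" "\<tau> < \<delta>" for \<sigma> \<tau>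
  proof -
    define k where "k = nn \<sigma>"
    define m where "m = nn \<tau>"
    have tm: "\<tau> < s m" unfolding m_def using nn1[OF st(2)] .
    have km: "k \<le> m" unfolding k_def using nn2[of \<sigma> m] tm st(1) by simp
    have sk: "\<sigma> < s k" unfolding k_def using nn1 st by (meson order.strict_trans)
    have a: "u m * (e (s m) \<tau> * e \<tau> \<sigma> - e (s m) \<sigma>) \<in> M \<sigma>"
      using Mmult'[OF uR[OF uU] e_coh'[OF st(1) tm sl]] .
    have b: "u m * e (s m) \<sigma> - u k * e (s k) \<sigma> \<in> M \<sigma>" using chain[OF sk km] .
    have "ed0 \<tau> * e \<tau> \<sigma> - ed0 \<sigma> = u m * (e (s m) \<tau> * e \<tau> \<sigma> - e (s m) \<sigma>)
        + (u m * e (s m) \<sigma> - u k * e (s k) \<sigma>)"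
      unfolding ed0_def k_def m_def by (simp add: algebra_simps)
    then show ?thesis using Madd'[OF a b] by simp
  qed

  \<comment> \<open>Step 2: a Cauchy family of units without limit\<close>
  obtain x :: "nat \<Rightarrow> 'a" where xR: "\<And>n. x n \<in> R"
    and cau: "\<And>\<nu>. \<nu> < \<delta> \<Longrightarrow> \<exists>N. \<forall>m\<ge>N. \<forall>n\<ge>N. x m - x n \<in> M \<nu>"
    and nolim: "\<not> (\<exists>y\<in>R. \<forall>\<nu><\<delta>. \<exists>N. \<forall>n\<ge>N. x n - y \<in> M \<nu>)"
    using notc unfolding quot_complete_def M_def by blast
  have "\<exists>\<nu>0<\<delta>. 1 \<notin> M \<nu>0"
  proof (rule ccontr)
    assume "\<not> ?thesis"
    then have one: "\<nu> < \<delta> \<Longrightarrow> 1 \<in> M \<nu>" for \<nu> by blast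
    have "\<forall>\<nu><\<delta>. \<exists>N. \<forall>n\<ge>N. x n - x 0 \<in> M \<nu>"
    proof (intro allI impI exI)
      fix \<nu> n assume "\<nu> < \<delta>"
      have "x n - x 0 \<in> R" using vd_R(6)[OF val xR xR] .
      from Mmult'[OF this one[OF \<open>\<nu> < \<delta>\<close>]] show "x n - x 0 \<in> M \<nu>" by simp
    qed
    then show False using nolim xR by blast
  qed
  then obtain \<nu>0 where nu0: "\<nu>0 < \<delta>" "1 \<notin> M \<nu>0" by blast
  define C where "C = (\<lambda>\<nu>. SOME N. \<forall>m\<ge>N. \<forall>n\<ge>N. x m - x n \<in> M \<nu>)"
  have C: "\<nu> < \<delta> \<Longrightarrow> m \<ge> C \<nu> \<Longrightarrow> n \<ge> C \<nu> \<Longrightarrow> x m - x n \<in> M \<nu>" for \<nu> m n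
    unfolding C_def using someI_ex[OF cau] by blast
  define N0 where "N0 = C \<nu>0"
  define NN where "NN = (\<lambda>\<sigma>. max (C \<sigma>) N0)"
  define cst :: 'a where "cst = (if x N0 \<in> units_of_dom R then 0 else 1)"
  define z where "z = (\<lambda>\<sigma>. x (NN \<sigma>) + cst)"
  have zU: "z \<sigma> \<in> units_of_dom R" for \<sigma>
  proof -
    define d where "d = x (NN \<sigma>) - x N0"
    have dM: "d \<in> M \<nu>0" unfolding d_def N0_def NN_def using C[OF nu0(1)] by simp
    have dR: "d \<in> R" unfolding d_def using vd_R(6)[OF val xR xR] .
    have dn: "d \<notin> units_of_dom R"
    proof
      assume "d \<in> units_of_dom R"
      then have "inverse d * d \<in> M \<nu>0" "d \<noteq> 0" using Mmult'[OF uinvR dM] unz by blast+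
      then show False using nu0(2) by simp
    qed
    show ?thesis
    proof (cases "x N0 \<in> units_of_dom R")
      case True
      have "x N0 + d \<in> units_of_dom R" using unit_plus_nonunit[OF val True dR dn] .
      then show ?thesis using True unfolding z_def cst_def d_def by simp
    next
      case False
      have "x N0 + d \<notin> units_of_dom R" using nonunit_add[OF val xR False dR dn] .
      moreover have "x N0 + d \<in> R" using vd_R(3)[OF val xR dR] .
      ultimately have "1 + (x N0 + d) \<in> units_of_dom R" using one_plus_nonunit[OF val] by blast
      then show ?thesis using False unfolding z_def cst_def d_def by (simp add: add.commute)
    qed
  qed
  have zc: "z \<tau> - z \<sigma> \<in> M \<sigma>" if st: "\<sigma> < \<tau>" "\<tau> < \<delta>" for \<sigma> \<tau>
  proof -
    define K where "K = max (NN \<tau>) (NN \<sigma>)"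
    have sd: "\<sigma> < \<delta>" using st by simp
    have "x (NN \<tau>) - x K \<in> M \<tau>" using C[OF st(2)] unfolding K_def NN_def by simp
    then have a: "x (NN \<tau>) - x K \<in> M \<sigma>" using Mmono'[of \<sigma> \<tau>] st(1) by (meson less_imp_le subsetD)
    have b: "x K - x (NN \<sigma>) \<in> M \<sigma>" using C[OF sd] unfolding K_def NN_def by simp
    show ?thesis using Madd'[OF a b] unfolding z_def by simp
  qed
  define ed :: "'i \<Rightarrow> nat \<Rightarrow> 'a" where "ed = (\<lambda>\<sigma> j. if j = 0 then ed0 \<sigma> else z \<sigma> * ed0 \<sigma>)"
  have ed1: "ed \<sigma> 1 = z \<sigma> * ed0 \<sigma>" and ed0': "ed \<sigma> 0 = ed0 \<sigma>" for \<sigma> by (simp_all add: ed_def)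
  show ?thesis
  proof (intro exI conjI)
    show "\<forall>\<sigma><\<delta>. \<forall>j\<in>{0,1}. ed \<sigma> j \<in> units_of_dom R"
      using ed0U zU unit_mult[OF val] by (auto simp: ed_def)
    show "\<forall>\<sigma> \<tau>. \<sigma> < \<tau> \<and> \<tau> < \<delta> \<longrightarrow>
              (\<forall>j\<in>{0,1}. ed \<tau> j * e \<tau> \<sigma> - ed \<sigma> j \<in> scale_set (r \<sigma>) A)"
    proof (intro allI impI ballI)
      fix \<sigma> \<tau> j assume st: "\<sigma> < \<tau> \<and> \<tau> < \<delta>" and j: "j \<in> {0::nat,1}"
      have sd: "\<sigma> < \<delta>" using st by auto
      have c0: "ed0 \<tau> * e \<tau> \<sigma> - ed0 \<sigma> \<in> M \<sigma>" using ed0c st by blast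
      have a: "z \<tau> * (ed0 \<tau> * e \<tau> \<sigma> - ed0 \<sigma>) \<in> M \<sigma>" using Mmult'[OF uR[OF zU] c0] .
      have b: "ed0 \<sigma> * (z \<tau> - z \<sigma>) \<in> M \<sigma>" using Mmult'[OF ed0R[OF sd] zc] st by blast
      have "z \<tau> * ed0 \<tau> * e \<tau> \<sigma> - z \<sigma> * ed0 \<sigma>
          = z \<tau> * (ed0 \<tau> * e \<tau> \<sigma> - ed0 \<sigma>) + ed0 \<sigma> * (z \<tau> - z \<sigma>)"
        by (simp add: algebra_simps)
      then have c1: "z \<tau> * ed0 \<tau> * e \<tau> \<sigma> - z \<sigma> * ed0 \<sigma> \<in> M \<sigma>" using Madd'[OF a b] by simp
      show "ed \<tau> j * e \<tau> \<sigma> - ed \<sigma> j \<in> scale_set (r \<sigma>) A"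
        using j c0 c1 unfolding M_def by (auto simp: ed_def)
    qed
    show "\<not> (\<exists>(c :: 'i \<Rightarrow> 'a) (cd :: nat \<Rightarrow> 'a).
                (\<forall>\<sigma><\<delta>. c \<sigma> \<in> units_of_dom R) \<and>
                (\<forall>j\<in>{0,1}. cd j \<in> units_of_dom R) \<and>
                (\<forall>\<sigma> \<tau>. \<sigma> < \<tau> \<and> \<tau> < \<delta> \<longrightarrow> c \<tau> - e \<tau> \<sigma> * c \<sigma> \<in> scale_set (r \<sigma>) A) \<and>
                (\<forall>\<sigma><\<delta>. \<forall>j\<in>{0,1}. cd j - ed \<sigma> j * c \<sigma> \<in> scale_set (r \<sigma>) A))"
    proof
      assume "\<exists>(c :: 'i \<Rightarrow> 'a) (cd :: nat \<Rightarrow> 'a).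
                (\<forall>\<sigma><\<delta>. c \<sigma> \<in> units_of_dom R) \<and>
                (\<forall>j\<in>{0,1}. cd j \<in> units_of_dom R) \<and>
                (\<forall>\<sigma> \<tau>. \<sigma> < \<tau> \<and> \<tau> < \<delta> \<longrightarrow> c \<tau> - e \<tau> \<sigma> * c \<sigma> \<in> scale_set (r \<sigma>) A) \<and>
                (\<forall>\<sigma><\<delta>. \<forall>j\<in>{0,1}. cd j - ed \<sigma> j * c \<sigma> \<in> scale_set (r \<sigma>) A)"
      then obtain c :: "'i \<Rightarrow> 'a" and cd :: "nat \<Rightarrow> 'a" where
        cU: "\<forall>\<sigma><\<delta>. c \<sigma> \<in> units_of_dom R" and cdU: "\<forall>j\<in>{0,1}. cd j \<in> units_of_dom R"
        and cdc: "\<forall>\<sigma><\<delta>. \<forall>j\<in>{0,1}. cd j - ed \<sigma> j * c \<sigma> \<in> scale_set (r \<sigma>) A"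
        by blast
      have cd0: "cd 0 \<in> units_of_dom R" and cd1: "cd 1 \<in> units_of_dom R" using cdU by auto
      define w where "w = cd 1 * inverse (cd 0)"
      have wR: "w \<in> R" unfolding w_def using vd_R(4)[OF val uR[OF cd1] uinvR[OF cd0]] .
      define y where "y = w - cst"
      have cstR: "cst \<in> R" unfolding cst_def using vd_R(1,2)[OF val] by simp
      have yR: "y \<in> R" unfolding y_def using vd_R(6)[OF val wR cstR] .
      have zw: "z \<nu> - w \<in> M \<nu>" if nd: "\<nu> < \<delta>" for \<nu>
      proof -
        have h0: "cd 0 - ed0 \<nu> * c \<nu> \<in> M \<nu>" using cdc nd unfolding M_def by (auto simp: ed0')
        have h1: "cd 1 - z \<nu> * ed0 \<nu> * c \<nu> \<in> M \<nu>" using cdc nd unfolding M_def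
          by (metis ed1 insertI1 insertI2 singletonI mult.assoc)
        have "- (z \<nu> * (cd 0 - ed0 \<nu> * c \<nu>)) \<in> M \<nu>" using Mneg'[OF Mmult'[OF uR[OF zU] h0]] .
        from Madd'[OF h1 this] have "cd 1 - z \<nu> * cd 0 \<in> M \<nu>" by (simp add: algebra_simps)
        from Mmult'[OF uinvR[OF cd0] this] have "inverse (cd 0) * (cd 1 - z \<nu> * cd 0) \<in> M \<nu>" .
        moreover have "inverse (cd 0) * (cd 1 - z \<nu> * cd 0) = - (z \<nu> - w)"
          using unz[OF cd0] unfolding w_def by (simp add: algebra_simps)
        ultimately have "- (z \<nu> - w) \<in> M \<nu>" by simp
        from Mneg'[OF this] show ?thesis by simp
      qed
      have "\<forall>\<nu><\<delta>. \<exists>N. \<forall>n\<ge>N. x n - y \<in> M \<nu>"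
      proof (intro allI impI exI)
        fix \<nu> n assume nd: "\<nu> < \<delta>" and n: "C \<nu> \<le> n"
        have a: "x n - x (NN \<nu>) \<in> M \<nu>" using C[OF nd n] unfolding NN_def by simp
        have "x n - y = (x n - x (NN \<nu>)) + (z \<nu> - w)" unfolding z_def y_def by simp
        then show "x n - y \<in> M \<nu>" using Madd'[OF a zw[OF nd]] by metis
      qed
      then show False using nolim yR by blast
    qed
  qed
qed

end
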